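(* Let $n\ge3$, let $\overrightarrow{C_n}$ be an oriented cycle and $D$ a distance set of $\overrightarrow{C_n}$ with $\min(D)=1$. If $\overrightarrow{C_n}$ is $D$-antimagic, then $\overrightarrow{C_n}$ is either unidirectional or $\Theta$-oriented.
   Context: An oriented graph is a simple graph each of whose edges is given one direction (an arc $(u,v)$ goes from $u$ to $v$). For vertices $u,v$, $d(u,v)$ is the length of a shortest directed path from $u$ to $v$ ($d(u,u)=0$, $\infty$ if no path). A distance set of an oriented graph is a nonempty set $D$ of nonnegative integers each of which is a finite distance $d(u,v)$ for some pair of vertices. $N_D(v)=\{y : d(v,y)\in D\}$; for a bijection $f:V\to\{1,\dots,|V|\}$, $\omega_D(v)=\sum_{x\in N_D(v)}f(x)$ (empty sum $0$); $f$ is $D$-antimagic if distinct vertices have distinct $D$-weights, and the graph is $D$-antimagic if such an $f$ exists. A source is a vertex of in-degree $0$, a sink a vertex of out-degree $0$. An oriented cycle $\overrightarrow{C_n}$ is an orientation of the cycle on $v_1,\dots,v_n$. It is unidirectional if (up to relabeling) its arcs are $(v_i,v_{i+1})$, $1\le i\le n-1$, and $(v_n,v_1)$. It is $\Theta$-oriented if it has exactly one source and exactly one sink and these are adjacent; up to relabeling its arcs are $(v_i,v_{i+1})$, $1\le i\le n-1$, and $(v_1,v_n)$. *)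

theory Defs
  imports Main
begin

text \<open>An oriented cycle on the vertex set {0..<n}: the underlying cycle has edges
  {i, (i+1) mod n} for i < n; the edge with index i is oriented i -> (i+1) mod n if
  ori i holds, and (i+1) mod n -> i otherwise.  Every oriented cycle is isomorphic to
  one of these.\<close>

definition cyc_arcs :: "nat \<Rightarrow> (nat \<Rightarrow> bool) \<Rightarrow> (nat \<times> nat) set" where
  "cyc_arcs n ori =
     {(i, (i + 1) mod n) | i. i < n \<and> ori i} \<union> {((i + 1) mod n, i) | i. i < n \<and> \<not> ori i}"

definition has_dist :: "(nat \<times> nat) set \<Rightarrow> nat \<Rightarrow> nat \<Rightarrow> nat \<Rightarrow> bool" where
  "has_dist A u v k \<longleftrightarrow> (u, v) \<in> A ^^ k \<and> (\<forall>j<k. (u, v) \<notin> A ^^ j)"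

definition is_distance_set :: "nat \<Rightarrow> (nat \<times> nat) set \<Rightarrow> nat set \<Rightarrow> bool" where
  "is_distance_set n A D \<longleftrightarrow>
     D \<noteq> {} \<and> (\<forall>k\<in>D. \<exists>u<n. \<exists>v<n. has_dist A u v k)"

definition D_nbhd :: "nat \<Rightarrow> (nat \<times> nat) set \<Rightarrow> nat set \<Rightarrow> nat \<Rightarrow> nat set" where
  "D_nbhd n A D v = {y. y < n \<and> (\<exists>k\<in>D. has_dist A v y k)}"

definition D_weight :: "nat \<Rightarrow> (nat \<times> nat) set \<Rightarrow> nat set \<Rightarrow> (nat \<Rightarrow> nat) \<Rightarrow> nat \<Rightarrow> nat" where
  "D_weight n A D f v = (\<Sum>x\<in>D_nbhd n A D v. f x)"

definition D_antimagic :: "nat \<Rightarrow> (nat \<times> nat) set \<Rightarrow> nat set \<Rightarrow> bool" where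
  "D_antimagic n A D \<longleftrightarrow>
     (\<exists>f. bij_betw f {0..<n} {1..n} \<and> inj_on (D_weight n A D f) {0..<n})"

definition unidirectional :: "nat \<Rightarrow> (nat \<times> nat) set \<Rightarrow> bool" where
  "unidirectional n A \<longleftrightarrow>
     (\<exists>g. bij_betw g {0..<n} {0..<n} \<and> A = {(g i, g ((i + 1) mod n)) | i. i < n})"

definition theta_oriented :: "nat \<Rightarrow> (nat \<times> nat) set \<Rightarrow> bool" where
  "theta_oriented n A \<longleftrightarrow>
     (\<exists>g. bij_betw g {0..<n} {0..<n} \<and>
        A = {(g i, g (i + 1)) | i. i + 1 < n} \<union> {(g 0, g (n - 1))})"

end

theory Submission imports Defs begin

lemma pred_suc: "i < n \<Longrightarrow> (Suc i mod n + n - 1) mod n = i"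
  by (cases "Suc i = n") auto

lemma suc_pred: "v < n \<Longrightarrow> Suc ((v + n - 1) mod n) mod n = v"
proof (cases v)
  case 0
  assume "v < n" then show ?thesis using 0 by (cases n) auto
next
  case (Suc m)
  assume "v < n"
  then have "(v + n - 1) mod n = m" using Suc by simp
  then show ?thesis using Suc \<open>v<n\<close> by simp
qed

lemma arc_iff:
  assumes "0 < n"
  shows "(v, w) \<in> cyc_arcs n ori \<longleftrightarrow> v < n \<and>
     ((ori v \<and> w = Suc v mod n) \<or> (\<not> ori ((v + n - 1) mod n) \<and> w = (v + n - 1) mod n))"
proof
  assume "(v, w) \<in> cyc_arcs n ori"
  then consider i where "i < n" "ori i" "v = i" "w = Suc i mod n"
    | i where "i < n" "\<not> ori i" "v = Suc i mod n" "w = i"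
    unfolding cyc_arcs_def by auto
  then show "v < n \<and> ((ori v \<and> w = Suc v mod n) \<or> (\<not> ori ((v + n - 1) mod n) \<and> w = (v + n - 1) mod n))"
  proof cases
    case 1 then show ?thesis by auto
  next
    case 2
    then show ?thesis using pred_suc[of i n] assms by auto
  qed
next
  assume h: "v < n \<and> ((ori v \<and> w = Suc v mod n) \<or> (\<not> ori ((v + n - 1) mod n) \<and> w = (v + n - 1) mod n))"
  show "(v, w) \<in> cyc_arcs n ori"
  proof (cases "ori v \<and> w = Suc v mod n")
    case True then show ?thesis using h unfolding cyc_arcs_def by auto
  next
    case False
    let ?i = "(v + n - 1) mod n"
    have "Suc ?i mod n = v" using h suc_pred by blast
    moreover have "?i < n" using assms by simp
    moreover have "w = ?i" "\<not> ori ?i" using h False by auto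
    ultimately have "(v, w) = ((?i + 1) mod n, ?i) \<and> ?i < n \<and> \<not> ori ?i" by simp
    then show ?thesis unfolding cyc_arcs_def by blast
  qed
qed

lemma sink_no_walk:
  fixes A :: "('a \<times> 'a) set"
  assumes "\<forall>w. (v,w) \<notin> A" "0 < k"
  shows "(v,y) \<notin> A^^k"
proof
  assume "(v,y) \<in> A^^k"
  obtain m where "k = Suc m" using assms(2) by (cases k) auto
  then show False using relpow_Suc_D2[where R=A and n=m and x=v and z=y] \<open>(v,y) \<in> A^^k\<close> assms(1) by blast
qed

lemma presink_walk:
  fixes A :: "('a \<times> 'a) set"
  assumes "\<forall>w. (u,w)\<in>A \<longrightarrow> w = t" "\<forall>w. (t,w)\<notin>A" "(u,y)\<in>A^^k" "0<k"
  shows "k = 1 \<and> y = t"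
proof -
  obtain m where k: "k = Suc m" using assms(4) by (cases k) auto
  then obtain z where z: "(u,z)\<in>A" "(z,y)\<in>A^^m" using assms(3) relpow_Suc_D2[where R=A and n=m and x=u and z=y] by blast
  have "z = t" using z assms(1) by blast
  show ?thesis
  proof (cases m)
    case 0 then show ?thesis using z k \<open>z = t\<close> by simp
  next
    case (Suc m') then show ?thesis using sink_no_walk[OF assms(2), of m y] z \<open>z = t\<close> by simp
  qed
qed

lemma sink_nbhd:
  assumes "\<forall>k\<in>D. 0<k" "\<forall>w. (v,w)\<notin>A"
  shows "D_nbhd n A D v = {}"
proof -
  have "\<not> has_dist A v y k" if "k \<in> D" for y k
    using sink_no_walk[OF assms(2), of k y] assms(1) that unfolding has_dist_def by blast
  then show ?thesis unfolding D_nbhd_def by blast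
qed

lemma presink_nbhd:
  assumes "\<forall>k\<in>D. 0<k" "1 \<in> D" "\<forall>w. (u,w)\<in>A \<longrightarrow> w = t" "\<forall>w. (t,w)\<notin>A" "(u,t)\<in>A" "t < n"
  shows "D_nbhd n A D u = {t}"
proof -
  have "u \<noteq> t" using assms(4,5) by blast
  have "has_dist A u t 1" unfolding has_dist_def using assms(5) \<open>u\<noteq>t\<close> by simp
  moreover have "y = t" if "k\<in>D" "has_dist A u y k" for y k
    using presink_walk[OF assms(3,4)] that assms(1) unfolding has_dist_def by blast
  ultimately show ?thesis unfolding D_nbhd_def using assms(2,6) by blast
qed

lemma dist_bound:
  assumes "finite A" "has_dist A u v k"
  shows "k \<le> card A"
proof (rule ccontr)
  assume "\<not> k \<le> card A"
  from assms(2) have "(u,v) \<in> A^^k" unfolding has_dist_def by blast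
  then obtain j where "j \<le> card A" "(u,v)\<in>A^^j" using relpow_finite_bounded[OF assms(1), of k] by blast
  then show False using assms(2) \<open>\<not> k \<le> card A\<close> unfolding has_dist_def by auto
qed

lemma rot: fixes n :: nat assumes "0<n" "i<n" shows "\<exists>k<n. i = (q+k) mod n"
proof -
  let ?k = "(i + n - q mod n) mod n"
  have "(q + ?k) mod n = (q mod n + (i + n - q mod n)) mod n" by (simp add: mod_simps)
  also have "q mod n < n" using assms by simp
  then have "q mod n + (i + n - q mod n) = i + n" by linarith
  finally show ?thesis using assms by (intro exI[of _ ?k]) auto
qed

lemma rot_inj: fixes n :: nat assumes "a<n" "b<n" "(q+a) mod n = (q+b) mod n" shows "a = b"
proof -
  have "(q+a) mod n = (q+b) mod n \<Longrightarrow> a \<le> b \<Longrightarrow> b < n \<Longrightarrow> a = b" for a b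
  proof -
    assume h: "(q+a) mod n = (q+b) mod n" "a \<le> b" "b < n"
    then have "n dvd (q+b) - (q+a)" using mod_eq_dvd_iff_nat[of "q+a" "q+b" n] by simp
    then have "n dvd b - a" by simp
    moreover have "b - a < n" using h by simp
    ultimately show "a = b" using h(2) by (metis diff_is_0_eq' dvd_imp_le le_antisym linorder_not_le zero_less_diff)
  qed
  then show ?thesis using assms by (metis nle_le)
qed


lemma uniT:
  assumes "\<forall>i<n. ori i"
  shows "unidirectional n (cyc_arcs n ori)"
  unfolding unidirectional_def
proof (intro exI[of _ id] conjI)
  show "bij_betw id {0..<n} {0..<n}" by simp
  show "cyc_arcs n ori = {(id i, id ((i + 1) mod n)) |i. i < n}"
    using assms unfolding cyc_arcs_def by auto
qed

lemma uniF:
  assumes "\<forall>i<n. \<not> ori i" "0 < n"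
  shows "unidirectional n (cyc_arcs n ori)"
  unfolding unidirectional_def
proof (intro exI[of _ "\<lambda>i. n - 1 - i"] conjI)
  show "bij_betw (\<lambda>i. n - 1 - i) {0..<n} {0..<n}"
    unfolding bij_betw_def inj_on_def
  proof (intro conjI ballI impI)
    show "(\<lambda>i. n - 1 - i) ` {0..<n} = {0..<n}"
    proof
      show "{0..<n} \<subseteq> (\<lambda>i. n - 1 - i) ` {0..<n}"
      proof
        fix x assume "x \<in> {0..<n}"
        then show "x \<in> (\<lambda>i. n - 1 - i) ` {0..<n}" by (intro image_eqI[of _ _ "n - 1 - x"]) auto
      qed
    qed auto
  qed auto
  have "cyc_arcs n ori = {((i + 1) mod n, i) | i. i < n}"
    using assms unfolding cyc_arcs_def by auto
  also have "\<dots> = {(n - 1 - i, n - 1 - (i + 1) mod n) |i. i < n}"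
  proof (intro equalityI subsetI)
    fix x assume "x \<in> {((i + 1) mod n, i) | i. i < n}"
    then obtain i where i: "i < n" "x = ((i + 1) mod n, i)" by blast
    show "x \<in> {(n - 1 - i, n - 1 - (i + 1) mod n) |i. i < n}"
    proof (cases "i = n - 1")
      case True
      then show ?thesis using i by (intro CollectI exI[of _ "n - 1"]) auto
    next
      case False
      then show ?thesis using i by (intro CollectI exI[of _ "n - 2 - i"]) auto
    qed
  next
    fix x assume "x \<in> {(n - 1 - i, n - 1 - (i + 1) mod n) |i. i < n}"
    then obtain i where i: "i < n" "x = (n - 1 - i, n - 1 - (i + 1) mod n)" by blast
    show "x \<in> {((i + 1) mod n, i) | i. i < n}"
    proof (cases "i = n - 1")
      case True
      then show ?thesis using i by (intro CollectI exI[of _ "n - 1"]) auto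
    next
      case False
      then show ?thesis using i by (intro CollectI exI[of _ "n - 2 - i"]) auto
    qed
  qed
  finally show "cyc_arcs n ori = {(n - 1 - i, n - 1 - (i + 1) mod n) |i. i < n}" .
qed


lemma rot_bij:
  fixes n :: nat assumes "0 < n"
  shows "bij_betw (\<lambda>k. (q + k) mod n) {0..<n} {0..<n}"
  unfolding bij_betw_def inj_on_def
proof (intro conjI ballI impI)
  show "(\<lambda>k. (q + k) mod n) ` {0..<n} = {0..<n}"
  proof
    show "{0..<n} \<subseteq> (\<lambda>k. (q + k) mod n) ` {0..<n}"
    proof
      fix x assume "x \<in> {0..<n}"
      then obtain k where "k < n" "x = (q + k) mod n" using rot[OF assms, of x q] by auto
      then show "x \<in> (\<lambda>k. (q + k) mod n) ` {0..<n}" by auto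
    qed
  qed (use assms in auto)
next
  fix a b assume "a \<in> {0..<n}" "b \<in> {0..<n}" "(q + a) mod n = (q + b) mod n"
  then show "a = b" using rot_inj[of a n b q] by auto
qed

lemma thetaT:
  fixes n :: nat
  assumes n: "0 < n" and nq: "\<not> ori (q mod n)" and oq: "\<forall>j. 1 \<le> j \<and> j < n \<longrightarrow> ori ((q+j) mod n)"
  shows "theta_oriented n (cyc_arcs n ori)"
  unfolding theta_oriented_def
proof (intro exI[of _ "\<lambda>k. (Suc q + k) mod n"] conjI)
  show "bij_betw (\<lambda>k. (Suc q + k) mod n) {0..<n} {0..<n}" using rot_bij[OF n] .
  let ?g = "\<lambda>k. (Suc q + k) mod n"
  have ori_iff: "ori i \<longleftrightarrow> i \<noteq> q mod n" if ilt: "i < n" for i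
  proof (cases "i = q mod n")
    case True then show ?thesis using nq by simp
  next
    case False
    obtain k where k: "k < n" "i = (q + k) mod n" using rot[OF n ilt, of q] by auto
    then have "k \<noteq> 0" using False by (cases k) auto
    then show ?thesis using oq k False by auto
  qed
  have g0: "?g 0 = (q mod n + 1) mod n" by (simp add: mod_simps)
  have gl: "?g (n - 1) = q mod n" using n by simp
  have gs: "?g (k + 1) = (?g k + 1) mod n" for k by (simp add: mod_simps)
  have A1: "{(i, (i + 1) mod n) |i. i < n \<and> ori i} = {(?g i, ?g (i + 1)) |i. i + 1 < n}"
  proof (intro equalityI subsetI)
    fix x assume "x \<in> {(i, (i + 1) mod n) |i. i < n \<and> ori i}"
    then obtain i where i: "i < n" "ori i" "x = (i, (i + 1) mod n)" by blast
    obtain k where k: "k < n" "i = ?g k" using rot[OF n i(1), of "Suc q"] by auto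
    have "k \<noteq> n - 1" using k gl i ori_iff by auto
    then have "k + 1 < n" using k by simp
    moreover have "x = (?g k, ?g (k + 1))" using i k gs[of k] by simp
    ultimately show "x \<in> {(?g i, ?g (i + 1)) |i. i + 1 < n}" by blast
  next
    fix x assume "x \<in> {(?g i, ?g (i + 1)) |i. i + 1 < n}"
    then obtain k where k: "k + 1 < n" "x = (?g k, ?g (k + 1))" by blast
    have "?g k \<noteq> q mod n"
    proof
      assume "?g k = q mod n"
      then have "(q + (k+1)) mod n = (q + 0) mod n" by simp
      then show False using rot_inj[of "k+1" n 0 q] k n by simp
    qed
    then have "ori (?g k)" using ori_iff n by simp
    then show "x \<in> {(i, (i + 1) mod n) |i. i < n \<and> ori i}" using k gs n by auto
  qed
  have A2: "{((i + 1) mod n, i) |i. i < n \<and> \<not> ori i} = {(?g 0, ?g (n - 1))}"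
    using ori_iff n g0 gl by auto
  show "cyc_arcs n ori = {(?g i, ?g (i + 1)) |i. i + 1 < n} \<union> {(?g 0, ?g (n - 1))}"
    unfolding cyc_arcs_def A1 A2 ..
qed


lemma thetaF:
  fixes n :: nat
  assumes n: "0 < n" and nq: "ori (q mod n)" and oq: "\<forall>j. 1 \<le> j \<and> j < n \<longrightarrow> \<not> ori ((q+j) mod n)"
  shows "theta_oriented n (cyc_arcs n ori)"
  unfolding theta_oriented_def
proof (intro exI[of _ "\<lambda>k. (q + (n - k)) mod n"] conjI)
  let ?g = "\<lambda>k. (q + (n - k)) mod n"
  show "bij_betw ?g {0..<n} {0..<n}"
    unfolding bij_betw_def inj_on_def
  proof (intro conjI ballI impI)
    show "?g ` {0..<n} = {0..<n}"
    proof
      show "{0..<n} \<subseteq> ?g ` {0..<n}"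
      proof
        fix x assume "x \<in> {0..<n}"
        then obtain j where j: "j < n" "x = (q + j) mod n" using rot[OF n, of x q] by auto
        show "x \<in> ?g ` {0..<n}"
        proof (cases j)
          case 0 then show ?thesis using j n by (intro image_eqI[of _ _ 0]) auto
        next
          case (Suc j') then show ?thesis using j n by (intro image_eqI[of _ _ "n - j"]) auto
        qed
      qed
    qed (use n in auto)
  next
    fix a b assume ab: "a \<in> {0..<n}" "b \<in> {0..<n}" "?g a = ?g b"
    have "(q + (n - a) mod n) mod n = (q + (n - b) mod n) mod n" using ab(3) by (simp add: mod_simps)
    then have "(n - a) mod n = (n - b) mod n" using rot_inj[of "(n - a) mod n" n "(n - b) mod n" q] n by simp
    then show "a = b" using ab(1,2) by (cases "a=0"; cases "b=0") auto
  qed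
  have ori_iff: "ori i \<longleftrightarrow> i = q mod n" if ilt: "i < n" for i
  proof (cases "i = q mod n")
    case True then show ?thesis using nq by simp
  next
    case False
    obtain k where k: "k < n" "i = (q + k) mod n" using rot[OF n ilt, of q] by auto
    then have "k \<noteq> 0" using False by (cases k) auto
    then show ?thesis using oq k False by auto
  qed
  have g0: "?g 0 = q mod n" by simp
  have gl: "?g (n - 1) = (q mod n + 1) mod n" using n by (simp add: mod_simps)
  have gs: "?g k = (?g (k + 1) + 1) mod n" if "k + 1 < n" for k
  proof -
    have "q + (n - k) = q + (n - (k + 1)) + 1" using that by simp
    then show ?thesis by (simp add: mod_simps)
  qed
  have A1: "{((i + 1) mod n, i) |i. i < n \<and> \<not> ori i} = {(?g i, ?g (i + 1)) |i. i + 1 < n}"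
  proof (intro equalityI subsetI)
    fix x assume "x \<in> {((i + 1) mod n, i) |i. i < n \<and> \<not> ori i}"
    then obtain i where i: "i < n" "\<not> ori i" "x = ((i + 1) mod n, i)" by blast
    obtain j where j: "j < n" "i = (q + j) mod n" using rot[OF n i(1), of q] by auto
    have "i \<noteq> q mod n" using i ori_iff by auto
    then have "j \<noteq> 0" using j by (cases j) auto
    then have k1: "n - 1 - j + 1 < n" and "n - (n - 1 - j + 1) = j" using j n by auto
    then have "i = ?g (n - 1 - j + 1)" using j by simp
    moreover have "x = (?g (n - 1 - j), ?g (n - 1 - j + 1))" using i gs[OF k1] calculation by simp
    ultimately show "x \<in> {(?g i, ?g (i + 1)) |i. i + 1 < n}" using k1 by blast
  next
    fix x assume "x \<in> {(?g i, ?g (i + 1)) |i. i + 1 < n}"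
    then obtain k where k: "k + 1 < n" "x = (?g k, ?g (k + 1))" by blast
    have "?g (k + 1) \<noteq> q mod n"
    proof
      assume "?g (k + 1) = q mod n"
      then have "(q + (n - (k + 1))) mod n = (q + 0) mod n" by simp
      then show False using rot_inj[of "n - (k+1)" n 0 q] k n by simp
    qed
    then have "\<not> ori (?g (k + 1))" using ori_iff n by simp
    then show "x \<in> {((i + 1) mod n, i) |i. i < n \<and> \<not> ori i}" using k gs[OF k(1)] n by auto
  qed
  have A2: "{(i, (i + 1) mod n) |i. i < n \<and> ori i} = {(?g 0, ?g (n - 1))}"
    using ori_iff n g0 gl by auto
  show "cyc_arcs n ori = {(?g i, ?g (i + 1)) |i. i + 1 < n} \<union> {(?g 0, ?g (n - 1))}"
    unfolding cyc_arcs_def A1 A2 by blast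
qed


lemma sink_pos:
  assumes n: "0 < n" and p: "p < n" "ori p" "\<not> ori (Suc p mod n)"
  shows "\<forall>w. (Suc p mod n, w) \<notin> cyc_arcs n ori"
  using arc_iff[OF n] pred_suc[OF p(1)] p by simp

theorem mainTheorem5:
  fixes n :: nat and ori :: "nat \<Rightarrow> bool" and D :: "nat set"
  assumes "n \<ge> 3"
    and "is_distance_set n (cyc_arcs n ori) D"
    and "Min D = 1"
    and "D_antimagic n (cyc_arcs n ori) D"
  shows "unidirectional n (cyc_arcs n ori) \<or> theta_oriented n (cyc_arcs n ori)"
proof -
  let ?A = "cyc_arcs n ori"
  have n: "0 < n" using assms(1) by simp
  have "?A \<subseteq> {0..<n} \<times> {0..<n}"
  proof
    fix x assume "x \<in> ?A"
    moreover obtain v w where "x = (v, w)" by (cases x)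
    ultimately show "x \<in> {0..<n} \<times> {0..<n}" using arc_iff[OF n, of v w ori] n by auto
  qed
  then have finA: "finite ?A" by (rule finite_subset) simp
  have "D \<subseteq> {0..card ?A}"
    using assms(2) dist_bound[OF finA] unfolding is_distance_set_def by auto
  then have finD: "finite D" by (rule finite_subset) simp
  have Dne: "D \<noteq> {}" using assms(2) unfolding is_distance_set_def by simp
  have D1: "1 \<in> D" using Min_in[OF finD Dne] assms(3) by simp
  have Dpos: "\<forall>k\<in>D. 0 < k" using Min_le[OF finD] assms(3) by fastforce
  obtain f where f: "inj_on (D_weight n ?A D f) {0..<n}"
    using assms(4) unfolding D_antimagic_def by blast
  have sinkw: "D_weight n ?A D f (Suc p mod n) = 0" if "p < n" "ori p" "\<not> ori (Suc p mod n)" for p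
    unfolding D_weight_def using sink_nbhd[OF Dpos sink_pos[OF n that]] by simp
  show ?thesis
  proof (cases "\<exists>p<n. ori p \<and> \<not> ori (Suc p mod n)")
    case False
    then have step: "ori i \<Longrightarrow> ori (Suc i mod n)" if "i < n" for i using that by blast
    show ?thesis
    proof (cases "ori 0")
      case True
      have "i < n \<longrightarrow> ori i" for i
        by (induction i) (use True step in \<open>auto\<close>, metis Suc_lessD mod_less step)
      then show ?thesis using uniT by blast
    next
      case False
      have "\<not> ori i" if "i < n" for i
      proof
        assume "ori i"
        have "ori ((i + k) mod n)" for k
        proof (induction k)
          case 0 then show ?case using \<open>ori i\<close> \<open>i<n\<close> by simp
        next
          case (Suc k)
          then have "ori (Suc ((i + k) mod n) mod n)" using step n by simp
          then show ?case by (simp add: mod_Suc_eq)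
        qed
        from this[of "n - i"] show False using False \<open>i<n\<close> by simp
      qed
      then show ?thesis using uniF n by blast
    qed
  next
    case True
    then obtain p where p: "p < n" "ori p" "\<not> ori (Suc p mod n)" by blast
    show ?thesis
    proof (cases "\<exists>p'<n. p' \<noteq> p \<and> ori p' \<and> \<not> ori (Suc p' mod n)")
      case True
      then obtain p' where p': "p' < n" "p' \<noteq> p" "ori p'" "\<not> ori (Suc p' mod n)" by blast
      have "Suc p mod n \<noteq> Suc p' mod n" using pred_suc[OF p(1)] pred_suc[OF p'(1)] p'(2) by metis
      moreover have "Suc p mod n \<in> {0..<n}" "Suc p' mod n \<in> {0..<n}" using n by auto
      ultimately have False using f sinkw[OF p] sinkw[OF p'(1,3,4)] unfolding inj_on_def by metis
      then show ?thesis ..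
    next
      case False
      then have uniq: "\<And>i. i < n \<Longrightarrow> ori i \<Longrightarrow> \<not> ori (Suc i mod n) \<Longrightarrow> i = p" by blast
      define s where "s k = ori ((Suc p + k) mod n)" for k
      have sstep: "s (k + 1)" if "k + 1 < n" "s k" for k
      proof (rule ccontr)
        assume ns: "\<not> s (k + 1)"
        let ?i = "(Suc p + k) mod n"
        have "Suc ?i mod n = (Suc p + (k + 1)) mod n" by (simp add: mod_Suc_eq)
        then have "?i = p" using uniq[of ?i] n that ns unfolding s_def by simp
        then have "(p + (k + 1)) mod n = (p + 0) mod n" using p(1) by simp
        then show False using rot_inj[of "k+1" n 0 p] that by simp
      qed
      have smono: "s j" if "s k" "k \<le> j" "j < n" for k j
        using that
      proof (induction j)
        case 0 then show ?case by simp
      next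
        case (Suc j)
        show ?case
        proof (cases "k = Suc j")
          case True then show ?thesis using Suc by simp
        next
          case False
          then have "s j" using Suc by simp
          then show ?thesis using sstep[of j] Suc by simp
        qed
      qed
      have s0: "\<not> s 0" using p unfolding s_def by simp
      show ?thesis
      proof (cases "s 1")
        case True
        have "theta_oriented n ?A"
        proof (rule thetaT[OF n, of ori "Suc p"])
          show "\<not> ori (Suc p mod n)" using p by simp
          show "\<forall>j. 1 \<le> j \<and> j < n \<longrightarrow> ori ((Suc p + j) mod n)"
            using smono[OF True] unfolding s_def by blast
        qed
        then show ?thesis ..
      next
        case s1: False
        show ?thesis
        proof (cases "s (n - 2)")
          case False
          have "theta_oriented n ?A"
          proof (rule thetaF[OF n, of ori p])
            show "ori (p mod n)" using p by simp
            show "\<forall>j. 1 \<le> j \<and> j < n \<longrightarrow> \<not> ori ((p + j) mod n)"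
            proof (intro allI impI)
              fix j assume j: "1 \<le> j \<and> j < n"
              have "j - 1 \<le> n - 2" "n - 2 < n" using j assms(1) by auto
              then have "\<not> s (j - 1)" using smono[of "j - 1" "n - 2"] False by blast
              moreover have "Suc p + (j - 1) = p + j" using j by simp
              ultimately show "\<not> ori ((p + j) mod n)" unfolding s_def by simp
            qed
          qed
          then show ?thesis ..
        next
          case True
          let ?t = "Suc p mod n"
          let ?u2 = "Suc (Suc p) mod n"
          have tsink: "\<forall>w. (?t, w) \<notin> ?A" using sink_pos[OF n p] .
          have "p + n - 1 = Suc p + (n - 2)" using assms(1) by simp
          then have pp: "(p + n - 1) mod n = (Suc p + (n - 2)) mod n" by simp
          have orpred: "ori ((p + n - 1) mod n)" using True pp unfolding s_def by simp
          have u1: "\<forall>w. (p, w) \<in> ?A \<longrightarrow> w = ?t" using arc_iff[OF n] orpred by auto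
          have u1a: "(p, ?t) \<in> ?A" using arc_iff[OF n] p by simp
          have pr2: "(?u2 + n - 1) mod n = ?t"
            using pred_suc[of ?t n] n by (simp add: mod_Suc_eq)
          have nu2: "\<not> ori ?u2" using s1 unfolding s_def by simp
          have u2: "\<forall>w. (?u2, w) \<in> ?A \<longrightarrow> w = ?t" using arc_iff[OF n] nu2 pr2 by auto
          have u2a: "(?u2, ?t) \<in> ?A" using arc_iff[OF n] pr2 p n by simp
          have tn: "?t < n" using n by simp
          have w1: "D_weight n ?A D f p = f ?t"
            unfolding D_weight_def using presink_nbhd[OF Dpos D1 u1 tsink u1a tn] by simp
          have w2: "D_weight n ?A D f ?u2 = f ?t"
            unfolding D_weight_def using presink_nbhd[OF Dpos D1 u2 tsink u2a tn] by simp
          have "p \<noteq> ?u2"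
          proof
            assume "p = ?u2"
            then have "(p + 0) mod n = (p + 2) mod n" using p(1) by simp
            then show False using rot_inj[of 0 n 2 p] assms(1) by simp
          qed
          moreover have "p \<in> {0..<n}" "?u2 \<in> {0..<n}" using p n by auto
          ultimately have False using f w1 w2 unfolding inj_on_def by metis
          then show ?thesis ..
        qed
      qed
    qed
  qed
qed

thm_deps mainTheorem5

end
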